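(* Let $S_k^*(q,a)=\sum_{1\le\ell\le q,\,(\ell,q)=1}e\left(\frac{a\ell^k}{q}\right)$. For all $q,a\in\mathbb N$ with $(q,a)=1$ we have $|S_2^*(q,a)|\le 8q^{-1/4}\varphi(q)$, and for every integer $k>2$, $$|S_k^*(q,a)|\le C_k q^{-\frac1k}\varphi(q),\qquad C_k=\prod_{p\le k^6}k,$$ the product being over primes $p\le k^6$.
   Context: $e(\alpha)=e^{2\pi i\alpha}$; $\varphi$ is Euler's totient function. *)

theory Defs
  imports "HOL-Analysis.Analysis" "HOL-Number_Theory.Number_Theory"
begin

definition e :: "real \<Rightarrow> complex" where
  "e \<alpha> = exp (2 * pi * \<i> * complex_of_real \<alpha>)"

definition S_star :: "nat \<Rightarrow> nat \<Rightarrow> nat \<Rightarrow> complex" where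
  "S_star k q a = (\<Sum>l\<in>{l\<in>{1..q}. coprime l q}. e (real (a * l ^ k) / real q))"

definition C_const :: "nat \<Rightarrow> real" where
  "C_const k = (\<Prod>p\<in>{p. prime p \<and> p \<le> k ^ 6}. real k)"

end

theory Submission
  imports Defs "HOL-Algebra.Multiplicative_Group"
begin



lemma e_add: "e (x + y) = e x * e y"
  unfolding e_def by (simp add: exp_add[symmetric] distrib_left distrib_right algebra_simps)

lemma e_alt: "e x = exp (\<i> * complex_of_real (2 * pi * x))"
  unfolding e_def by (simp add: algebra_simps)

lemma norm_e [simp]: "cmod (e x) = 1"
  unfolding e_alt by (rule norm_exp_i_times)

lemma e_eq_1_iff: "e x = 1 \<longleftrightarrow> x \<in> \<int>"
proof
  assume "e x = 1"
  then obtain n :: int where "2 * pi * x = of_int (2 * n) * pi"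
    unfolding e_def exp_eq_1 by auto
  then have "x = of_int n" by simp
  then show "x \<in> \<int>" by simp
next
  assume "x \<in> \<int>"
  then obtain n :: int where "x = of_int n" by (auto elim: Ints_cases)
  then show "e x = 1" unfolding e_def exp_eq_1 by (auto intro!: exI[of _ n])
qed

lemma e_int [simp]: "e (of_int n) = 1"
  by (simp add: e_eq_1_iff)

lemma e_nat [simp]: "e (of_nat n) = 1"
  by (simp add: e_eq_1_iff)

lemma e_add_int: "e (x + of_int n) = e x"
  by (simp add: e_add)

lemma e_mult_nat: "e (of_nat n * x) = e x ^ n"
proof -
  have "e (of_nat n * x) = exp (of_nat n * (2 * pi * \<i> * complex_of_real x))"
    unfolding e_def by (simp add: algebra_simps)
  also have "\<dots> = e x ^ n" unfolding exp_of_nat_mult e_def ..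
  finally show ?thesis .
qed

lemma cnj_e: "cnj (e x) = e (- x)"
  unfolding e_def exp_cnj by simp

lemma e_mod:
  assumes "q > 0"
  shows "e (real m / real q) = e (real (m mod q) / real q)"
proof -
  have "real m = real q * real (m div q) + real (m mod q)"
    by (metis div_mult_mod_eq of_nat_add of_nat_mult mult.commute)
  then have "real m / real q = real (m mod q) / real q + of_nat (m div q)"
    using assms by (simp add: field_simps)
  then show ?thesis by (simp add: e_add)
qed

lemma e_cong:
  assumes "q > 0" "[m1 = m2] (mod q)"
  shows "e (real m1 / real q) = e (real m2 / real q)"
  using assms unfolding cong_def by (metis e_mod)

lemma sum_e_lin:
  assumes "q > 0"
  shows "(\<Sum>b<q. e (real b * of_int z / real q)) = (if int q dvd z then of_nat q else 0)"
proof -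
  define w where "w = e (of_int z / real q)"
  have pw: "e (real b * of_int z / real q) = w ^ b" for b
    unfolding w_def e_mult_nat[symmetric] by simp
  have wq: "w ^ q = 1"
    unfolding w_def e_mult_nat[symmetric] using assms by simp
  have w1: "w = 1 \<longleftrightarrow> int q dvd z"
  proof
    assume "w = 1"
    then obtain n where n: "of_int z / real q = of_int n" unfolding w_def e_eq_1_iff by (auto elim: Ints_cases)
    then have "of_int z = real_of_int (int q * n)" using assms by (simp add: field_simps)
    then have "z = int q * n" by linarith
    then show "int q dvd z" by simp
  next
    assume "int q dvd z"
    then obtain n where "z = int q * n" by auto
    then have "of_int z / real q = of_int n" using assms by simp
    then show "w = 1" unfolding w_def by simp
  qed
  show ?thesis
    unfolding pw sum_gp_strict using wq w1 by auto
qed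




definition U :: "nat \<Rightarrow> nat set" where "U q = {l. l < q \<and> coprime l q}"
definition T :: "nat \<Rightarrow> nat \<Rightarrow> nat \<Rightarrow> complex" where
  "T k q a = (\<Sum>l\<in>U q. e (real (a * l ^ k) / real q))"

lemma finite_U [simp]: "finite (U q)" unfolding U_def by auto

lemma bij_mod_U:
  assumes "q \<ge> 1"
  shows "bij_betw (\<lambda>l. l mod q) {l\<in>{1..q}. coprime l q} (U q)"
proof (rule bij_betwI')
  fix x y assume x: "x \<in> {l\<in>{1..q}. coprime l q}" and y: "y \<in> {l\<in>{1..q}. coprime l q}"
  show "(x mod q = y mod q) = (x = y)"
  proof
    assume h: "x mod q = y mod q"
    consider "x = q" "y = q" | "x = q" "y < q" | "x < q" "y = q" | "x < q" "y < q" using x y by force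
    then show "x = y"
      by cases (use h x y in auto)
  qed simp
next
  fix x assume "x \<in> {l\<in>{1..q}. coprime l q}"
  then show "x mod q \<in> U q" unfolding U_def using assms by auto
next
  fix y assume y: "y \<in> U q"
  show "\<exists>x\<in>{l\<in>{1..q}. coprime l q}. y = x mod q"
  proof (cases "y = 0")
    case True
    then have "q = 1" using y unfolding U_def by auto
    then show ?thesis using True by (intro bexI[of _ 1]) auto
  next
    case False
    then show ?thesis using y unfolding U_def by (intro bexI[of _ y]) auto
  qed
qed

lemma card_U: "q \<ge> 1 \<Longrightarrow> card (U q) = totient q"
proof -
  assume q: "q \<ge> 1"
  have "{k \<in> {0<..q}. coprime k q} = {l\<in>{1..q}. coprime l q}" by auto
  then show ?thesis unfolding totient_def totatives_def
    using bij_betw_same_card[OF bij_mod_U[OF q]] by simp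
qed

lemma e_term_cong:
  assumes "q > 0" "[x = y] (mod q)"
  shows "e (real (a * x ^ k) / real q) = e (real (a * y ^ k) / real q)"
  apply (rule e_cong[OF assms(1)])
  using assms(2) by (intro cong_mult cong_refl cong_pow)

lemma S_eq_T:
  assumes "q \<ge> 1"
  shows "S_star k q a = T k q a"
proof -
  have "T k q a = (\<Sum>l\<in>{l\<in>{1..q}. coprime l q}. e (real (a * (l mod q) ^ k) / real q))"
    unfolding T_def by (rule sum.reindex_bij_betw[OF bij_mod_U[OF assms], symmetric])
  also have "\<dots> = S_star k q a" unfolding S_star_def
    using assms by (intro sum.cong refl e_term_cong) (auto simp: cong_def)
  finally show ?thesis ..
qed

lemma T_mod:
  assumes "q > 0" shows "T k q a = T k q (a mod q)"
  unfolding T_def using assms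
  by (intro sum.cong refl e_cong) (auto simp: cong_def mod_mult_left_eq)

lemma T_unit:
  assumes "q > 0" "coprime u q"
  shows "T k q (a * u ^ k) = T k q a"
proof -
  have inj: "inj_on (\<lambda>l. (u * l) mod q) (U q)"
  proof
    fix x y assume "x \<in> U q" "y \<in> U q" "(u * x) mod q = (u * y) mod q"
    then have "[u * x = u * y] (mod q)" "x < q" "y < q" unfolding U_def cong_def by auto
    then show "x = y" using assms(2) cong_mult_lcancel_nat cong_less_modulus_unique_nat by blast
  qed
  have sub: "(\<lambda>l. (u * l) mod q) ` U q \<subseteq> U q"
    unfolding U_def using assms by auto
  have bij: "bij_betw (\<lambda>l. (u * l) mod q) (U q) (U q)"
    unfolding bij_betw_def using inj endo_inj_surj[OF finite_U sub inj] by auto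
  have "T k q a = (\<Sum>l\<in>U q. e (real (a * ((u * l) mod q) ^ k) / real q))"
    unfolding T_def by (rule sum.reindex_bij_betw[OF bij, symmetric])
  also have "\<dots> = T k q (a * u ^ k)" unfolding T_def
  proof (intro sum.cong refl)
    fix l
    have "[a * ((u * l) mod q) ^ k = a * (u * l) ^ k] (mod q)"
      by (intro cong_mult cong_refl cong_pow) (simp add: cong_def)
    then have "[a * ((u * l) mod q) ^ k = a * u ^ k * l ^ k] (mod q)"
      by (simp add: power_mult_distrib mult.assoc)
    then show "e (real (a * ((u * l) mod q) ^ k) / real q) = e (real (a * u ^ k * l ^ k) / real q)"
      by (rule e_cong[OF assms(1)])
  qed
  finally show ?thesis ..
qed

lemma T_one [simp]: "T k 1 a = 1"
proof -
  have "U 1 = {0}" unfolding U_def by auto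
  then show ?thesis unfolding T_def using e_nat[of a] by (cases k) (simp_all add: e_def)
qed

lemma norm_T_le: "q \<ge> 1 \<Longrightarrow> cmod (T k q a) \<le> totient q"
proof -
  assume q: "q \<ge> 1"
  have "cmod (T k q a) \<le> (\<Sum>l\<in>U q. cmod (e (real (a * l ^ k) / real q)))"
    unfolding T_def by (rule norm_sum)
  also have "\<dots> = card (U q)" by simp
  finally show ?thesis using card_U[OF q] by simp
qed




lemma coprime_add_mult_m:
  fixes x y m :: nat
  assumes "m \<noteq> 0"
  shows "coprime (x + y * m) m \<longleftrightarrow> coprime x m"
proof -
  have "(x + y * m) mod m = x mod m" by simp
  then show ?thesis using coprime_mod_left_iff[OF assms, of "x + y*m"] coprime_mod_left_iff[OF assms, of x]
    by simp
qed

lemma binom_cong_mn: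
  fixes x y m n k :: nat
  assumes "coprime m n" "k \<ge> 1"
  shows "[(x*n + y*m)^k = (x*n)^k + (y*m)^k] (mod m*n)"
proof (rule coprime_cong_mult_nat[OF _ _ assms(1)])
  have "[(x*n + y*m)^k = (x*n + 0)^k] (mod m)"
    by (intro cong_pow) (simp add: cong_def)
  moreover have "[(x*n)^k + 0 = (x*n)^k + (y*m)^k] (mod m)"
    using assms(2) by (intro cong_add cong_refl) (simp add: cong_def power_mult_distrib power_0_left)
  ultimately show "[(x*n + y*m)^k = (x*n)^k + (y*m)^k] (mod m)"
    by (metis add.right_neutral cong_trans)
next
  have "[(x*n + y*m)^k = (0 + y*m)^k] (mod n)"
    by (intro cong_pow) (simp add: cong_def)
  moreover have "[0 + (y*m)^k = (x*n)^k + (y*m)^k] (mod n)"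
    using assms(2) by (intro cong_add cong_refl) (simp add: cong_def power_mult_distrib power_0_left)
  ultimately show "[(x*n + y*m)^k = (x*n)^k + (y*m)^k] (mod n)"
    by (metis add_0 cong_trans)
qed

lemma T_mult:
  assumes cop: "coprime m n" and m: "m \<ge> 1" and n: "n \<ge> 1" and k: "k \<ge> 1"
  shows "T k (m*n) a = T k m (a * n^(k-1)) * T k n (a * m^(k-1))"
proof -
  define f where "f = (\<lambda>(x,y). (x*n + y*m) mod (m*n))"
  have sub: "f ` (U m \<times> U n) \<subseteq> U (m*n)"
  proof
    fix z assume "z \<in> f ` (U m \<times> U n)"
    then obtain x y where xy: "x \<in> U m" "y \<in> U n" and z: "z = (x*n + y*m) mod (m*n)"
      unfolding f_def by auto
    have "coprime (x*n + y*m) m" using xy cop m coprime_add_mult_m[of m "x*n" y]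
      unfolding U_def by (auto simp: coprime_commute)
    moreover have "coprime (y*m + x*n) n" using xy cop n coprime_add_mult_m[of n "y*m" x]
      unfolding U_def by (auto simp: coprime_commute)
    ultimately have "coprime (x*n + y*m) (m*n)" by (simp add: add.commute)
    then have "coprime ((x*n + y*m) mod (m*n)) (m*n)" using m n coprime_mod_left_iff[of "m*n" "x*n + y*m"] by simp
    then show "z \<in> U (m*n)" unfolding U_def z using m n by simp
  qed
  have inj: "inj_on f (U m \<times> U n)"
  proof (rule inj_onI, clarify)
    fix x y x' y' assume xy: "x \<in> U m" "y \<in> U n" "x' \<in> U m" "y' \<in> U n"
      and eq: "f (x, y) = f (x', y')"
    have c: "[x*n + y*m = x'*n + y'*m] (mod m*n)" using eq unfolding f_def cong_def by simp
    have "[x*n + y*m = x'*n + y'*m] (mod m)" using c cong_modulus_mult_nat by blast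
    then have "[x*n = x'*n] (mod m)" unfolding cong_def by simp
    then have "[x = x'] (mod m)" using cop cong_mult_rcancel_nat by (simp add: coprime_commute)
    then have 1: "x = x'" using xy cong_less_modulus_unique_nat unfolding U_def by blast
    have "[x*n + y*m = x'*n + y'*m] (mod n)" using c cong_modulus_mult_nat by (metis mult.commute)
    then have "[y*m = y'*m] (mod n)" unfolding cong_def by simp
    then have "[y = y'] (mod n)" using cop cong_mult_rcancel_nat by simp
    then have 2: "y = y'" using xy cong_less_modulus_unique_nat unfolding U_def by blast
    show "x = x' \<and> y = y'" using 1 2 by simp
  qed
  have "card (f ` (U m \<times> U n)) = card (U (m*n))"
    using card_image[OF inj] card_U m n totient_mult_coprime[OF cop]
    by (simp add: card_cartesian_product)
  then have "f ` (U m \<times> U n) = U (m*n)"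
    using card_subset_eq[OF finite_U sub] by simp
  then have bij: "bij_betw f (U m \<times> U n) (U (m*n))" unfolding bij_betw_def using inj by simp
  have "T k (m*n) a = (\<Sum>z\<in>U m \<times> U n. e (real (a * f z ^ k) / real (m*n)))"
    unfolding T_def by (rule sum.reindex_bij_betw[OF bij, symmetric])
  also have "\<dots> = (\<Sum>z\<in>U m \<times> U n. e (real (a * n^(k-1) * fst z ^ k) / real m) *
                                     e (real (a * m^(k-1) * snd z ^ k) / real n))"
  proof (intro sum.cong refl, clarify)
    fix x y assume "x \<in> U m" "y \<in> U n"
    have mn: "m * n > 0" using m n by simp
    have "e (real (a * f (x,y) ^ k) / real (m*n)) = e (real (a * (x*n + y*m) ^ k) / real (m*n))"
      unfolding f_def using mn by (intro e_term_cong) (auto simp: cong_def)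
    also have "\<dots> = e (real (a * ((x*n)^k + (y*m)^k)) / real (m*n))"
      using mn binom_cong_mn[OF cop k, of x y] by (intro e_cong) (auto intro: cong_mult cong_refl)
    also have "real (a * ((x*n)^k + (y*m)^k)) / real (m*n) =
        real (a * n^(k-1) * x ^ k) / real m + real (a * m^(k-1) * y ^ k) / real n"
    proof -
      have nk: "n^k = n^(k-1) * n" "m^k = m^(k-1)*m" using k by (metis Suc_diff_1 less_le_trans zero_less_one power_Suc2)+
      have "real (a * ((x*n)^k + (y*m)^k)) = real a * real x ^ k * real n^(k-1) * real n + real a * real y ^ k * real m^(k-1) * real m"
        unfolding power_mult_distrib using nk by (simp add: algebra_simps)
      then show ?thesis using m n by (simp add: field_simps)
    qed
    finally show "e (real (a * f (x,y) ^ k) / real (m*n)) = e (real (a * n^(k-1) * fst (x,y) ^ k) / real m) *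
                                     e (real (a * m^(k-1) * snd (x,y) ^ k) / real n)"
      by (simp add: e_add)
  qed
  also have "\<dots> = T k m (a * n^(k-1)) * T k n (a * m^(k-1))"
    unfolding T_def sum_product sum.cartesian_product by (intro sum.cong refl) auto
  finally show ?thesis .
qed




lemma binom_ex:
  fixes x c :: nat
  shows "\<exists>r. (x + c)^(Suc k) = x^(Suc k) + Suc k * x^k * c + c^2 * r"
proof (induction k)
  case 0 then show ?case by (intro exI[of _ 0]) simp
next
  case (Suc k)
  then obtain r where r: "(x + c)^(Suc k) = x^(Suc k) + Suc k * x^k * c + c^2 * r" by blast
  have "(x + c)^(Suc (Suc k)) = (x + c) * (x^(Suc k) + Suc k * x^k * c + c^2 * r)"
    using r by simp
  also have "\<dots> = x^(Suc (Suc k)) + Suc (Suc k) * x^(Suc k) * c + c^2 * (x * r + Suc k * x^k + c * r)"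
    by (simp add: algebra_simps power2_eq_square)
  finally show ?case by blast
qed

lemma sum_e_geo:
  assumes "p > 0" "\<not> p dvd b" "p dvd N"
  shows "(\<Sum>y<N. e (real (b * y) / real p)) = 0"
proof -
  define w where "w = e (real b / real p)"
  have pw: "e (real (b * y) / real p) = w ^ y" for y
    unfolding w_def e_mult_nat[symmetric] by (simp add: algebra_simps)
  obtain j where N: "N = p * j" using assms(3) by auto
  have wN: "w ^ N = 1"
    unfolding w_def e_mult_nat[symmetric] using assms(1) N e_nat[of "j*b"] by simp
  have w1: "w \<noteq> 1"
  proof
    assume "w = 1"
    then obtain n where n: "real b / real p = of_int n" unfolding w_def e_eq_1_iff by (auto elim: Ints_cases)
    then have "real b = real p * of_int n" using assms(1) by (simp add: field_simps)
    then have "int b = int p * n" by (metis of_int_eq_iff of_int_mult of_int_of_nat_eq)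
    then have "int p dvd int b" by simp
    then show False using assms(2) by simp
  qed
  show ?thesis unfolding pw sum_gp_strict using wN w1 by simp
qed

lemma T_vanish:
  assumes p: "prime p" and k: "k \<ge> 1" and a: "coprime p a"
    and t: "t \<ge> 2 * multiplicity p k + 2"
  shows "T k (p^t) a = 0"
proof -
  define v where "v = multiplicity p k"
  have kp: "k \<noteq> 0" "\<not> is_unit p" using k p by auto
  obtain k' where kk: "k = p^v * k'" and k': "\<not> p dvd k'"
    using multiplicity_decompose'[OF kp] unfolding v_def by blast
  define s where "s = t - v - 1"
  define r where "r = v + 1"
  have s1: "s \<ge> 1" and ts: "t = s + r" and s2: "t \<le> 2 * s"
    using t unfolding s_def r_def v_def by auto
  define P where "P = p^s"
  define R where "R = p^r"
  have p0: "p > 0" using p prime_gt_0_nat by blast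
  have P0: "P > 0" "R > 0" unfolding P_def R_def using p0 by auto
  have pt: "p^t = P * R" unfolding P_def R_def ts by (simp add: power_add)
  have copP: "coprime x P \<longleftrightarrow> coprime x p" for x
    unfolding P_def using s1 by simp
  have copt: "coprime x (p^t) \<longleftrightarrow> coprime x p" for x
    using s1 ts by simp
  define g where "g = (\<lambda>(x,y). x + P * y)"
  have bij: "bij_betw g (U P \<times> {..<R}) (U (p^t))"
  proof (rule bij_betwI')
    fix z1 z2 assume z1: "z1 \<in> U P \<times> {..<R}" and z2: "z2 \<in> U P \<times> {..<R}"
    obtain x1 y1 where 1: "z1 = (x1, y1)" by force
    obtain x2 y2 where 2: "z2 = (x2, y2)" by force
    show "(g z1 = g z2) = (z1 = z2)"
    proof
      assume "g z1 = g z2"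
      then have h: "x1 + P * y1 = x2 + P * y2" unfolding g_def 1 2 by simp
      have x: "x1 < P" "x2 < P" using z1 z2 unfolding 1 2 U_def by auto
      have "(x1 + P * y1) mod P = x1" "(x2 + P * y2) mod P = x2" using x by auto
      then have "x1 = x2" using h by metis
      then have "y1 = y2" using h P0 by simp
      then show "z1 = z2" using \<open>x1 = x2\<close> 1 2 by simp
    qed simp
  next
    fix z assume z: "z \<in> U P \<times> {..<R}"
    obtain x y where 1: "z = (x, y)" by force
    have x: "x < P" "coprime x p" "y < R" using z copP unfolding 1 U_def by auto
    have "x + P * y < P + P * y" using x by simp
    also have "\<dots> = P * (y + 1)" by simp
    also have "\<dots> \<le> P * R" using x by (intro mult_le_mono2) simp
    finally have lt: "x + P * y < p^t" using pt by simp
    have "(p^(s-1) * y) * p = P * y"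
    proof -
      have ps: "p^(s-1) * p = P" unfolding P_def using s1 by (cases s) auto
      then show ?thesis by (metis mult.assoc mult.commute)
    qed
    then have eq: "x + P * y = x + (p^(s-1) * y) * p" by (metis)
    have "coprime (x + P * y) p" unfolding eq using coprime_add_mult_m[of p x "p^(s-1)*y"] p0 x by simp
    then show "g z \<in> U (p^t)" unfolding g_def 1 U_def using lt copt by simp
  next
    fix l assume l: "l \<in> U (p^t)"
    have lt: "l < P * R" "coprime l p" using l copt pt unfolding U_def by auto
    have "coprime l P" using lt copP by simp
    then have "coprime (l mod P) P" using P0 by simp
    moreover have "l mod P < P" using P0 by simp
    moreover have "l div P < R" using lt P0 by (simp add: less_mult_imp_div_less mult.commute)
    ultimately have "(l mod P, l div P) \<in> U P \<times> {..<R}" unfolding U_def by simp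
    moreover have "l = g (l mod P, l div P)" unfolding g_def by simp
    ultimately show "\<exists>z\<in>U P \<times> {..<R}. l = g z" by blast
  qed
  obtain k0 where k0: "k = Suc k0" using k by (cases k) auto
  have tm: "e (real (a * g (x, y) ^ k) / real (p^t)) =
      e (real (a * x ^ k) / real (p^t)) * e (real ((a * k' * x ^ k0) * y) / real p)" if x: "x \<in> U P" for x y
  proof -
    obtain rr where rr: "(x + P * y)^k = x^k + k * x^k0 * (P * y) + (P * y)^2 * rr"
      using binom_ex[of x "P * y" k0] k0 by auto
    have "p^t dvd (P * y)^2 * rr"
    proof -
      have "p^t dvd P^2" unfolding P_def power_mult[symmetric] using s2
        by (simp add: le_imp_power_dvd mult.commute)
      then show ?thesis by (simp add: power_mult_distrib)
    qed
    then obtain c where c: "(P * y)^2 * rr = p^t * c" by (auto elim: dvdE)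
    have "[a * (x + P * y)^k = a * (x^k + k * x^k0 * (P * y))] (mod p^t)"
      unfolding rr c by (intro cong_mult cong_refl) (simp add: cong_def)
    then have "e (real (a * g (x, y) ^ k) / real (p^t)) = e (real (a * (x^k + k * x^k0 * (P * y))) / real (p^t))"
      unfolding g_def using p0 by (intro e_cong) auto
    also have "real (a * (x^k + k * x^k0 * (P * y))) / real (p^t) =
        real (a * x ^ k) / real (p^t) + real ((a * k' * x ^ k0) * y) / real p"
    proof -
      have vs: "v + s = t - 1" using t unfolding s_def v_def by simp
      have kP: "k * P = k' * p^(t-1)" unfolding kk P_def vs[symmetric] power_add by (simp add: mult_ac)
      have nat_id: "a * (x^k + k * x^k0 * (P * y)) = a * x^k + (a * k' * x^k0 * y) * p^(t-1)"
      proof -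
        have "a * (x^k + k * x^k0 * (P * y)) = a * x^k + a * x^k0 * y * (k * P)" by (simp add: algebra_simps)
        also have "\<dots> = a * x^k + (a * k' * x^k0 * y) * p^(t-1)" unfolding kP by (simp add: mult_ac)
        finally show ?thesis .
      qed
      have ptr: "real p^t = real p^(t-1) * real p" using t by (cases t) auto
      have pt0: "real p^(t-1) > 0" using p0 by simp
      have "real (a * (x^k + k * x^k0 * (P * y))) / real (p^t) =
          real (a * x ^ k) / real (p^t) + (real (a * k' * x^k0 * y) * real p^(t-1)) / (real p^(t-1) * real p)"
        unfolding nat_id ptr[symmetric] by (simp add: add_divide_distrib)
      also have "(real (a * k' * x^k0 * y) * real p^(t-1)) / (real p^(t-1) * real p) = real (a * k' * x^k0 * y) / real p"
        using pt0 by simp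
      finally show ?thesis by simp
    qed
    finally show ?thesis by (simp add: e_add)
  qed
  have "T k (p^t) a = (\<Sum>z\<in>U P \<times> {..<R}. e (real (a * g z ^ k) / real (p^t)))"
    unfolding T_def by (rule sum.reindex_bij_betw[OF bij, symmetric])
  also have "\<dots> = (\<Sum>x\<in>U P. \<Sum>y<R. e (real (a * g (x,y) ^ k) / real (p^t)))"
    by (subst sum.cartesian_product) (simp add: case_prod_unfold)
  also have "\<dots> = (\<Sum>x\<in>U P. e (real (a * x ^ k) / real (p^t)) * (\<Sum>y<R. e (real ((a * k' * x ^ k0) * y) / real p)))"
  proof (intro sum.cong refl)
    fix x assume x: "x \<in> U P"
    show "(\<Sum>y<R. e (real (a * g (x,y) ^ k) / real (p^t))) = e (real (a * x ^ k) / real (p^t)) * (\<Sum>y<R. e (real ((a * k' * x ^ k0) * y) / real p))"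
      unfolding sum_distrib_left by (rule sum.cong[OF refl]) (rule tm[OF x])
  qed
  also have "\<dots> = 0"
  proof (intro sum.neutral ballI)
    fix x assume x: "x \<in> U P"
    have "coprime x p" using x copP unfolding U_def by auto
    have na: "\<not> p dvd a" using a p coprime_common_divisor[of p a p] by auto
    have nx: "\<not> p dvd x" using \<open>coprime x p\<close> p coprime_common_divisor[of x p p] by auto
    have "\<not> p dvd a * k' * x ^ k0"
    proof
      assume "p dvd a * k' * x ^ k0"
      then have "p dvd a \<or> p dvd k' \<or> p dvd x ^ k0" using p by (simp add: prime_dvd_mult_iff)
      then show False using na nx k' p prime_dvd_power by blast
    qed
    moreover have "p dvd R" unfolding R_def r_def by simp
    ultimately show "e (real (a * x ^ k) / real (p^t)) * (\<Sum>y<R. e (real ((a * k' * x ^ k0) * y) / real p)) = 0"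
      using sum_e_geo[OF p0, of "a * k' * x ^ k0" R] by simp
  qed
  finally show ?thesis .
qed




lemma roots_unity_int:
  assumes p: "prime p" and k: "k \<ge> 1"
  shows "card {x::int. 0 \<le> x \<and> x < int p \<and> x ^ k mod int p = 1} \<le> k"
proof -
  interpret residues_prime p "residue_ring (int p)" by unfold_locales (rule p)
  have eq: "{x \<in> carrier (residue_ring (int p)). x [^]\<^bsub>residue_ring (int p)\<^esub> k = \<one>\<^bsub>residue_ring (int p)\<^esub>}
        = {x::int. 0 \<le> x \<and> x < int p \<and> x ^ k mod int p = 1}"
  proof -
    have "x [^]\<^bsub>residue_ring (int p)\<^esub> k = x ^ k mod int p" if "0 \<le> x" "x < int p" for x
      using pow_cong[of x k] that by simp
    then show ?thesis unfolding res_carrier_eq res_one_eq by auto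
  qed
  have "card {x \<in> carrier (residue_ring (int p)). x [^]\<^bsub>residue_ring (int p)\<^esub> k = \<one>\<^bsub>residue_ring (int p)\<^esub>} \<le> k"
    by (rule num_roots_le_deg) (use k in auto)
  then show ?thesis unfolding eq .
qed

lemma roots_unity_nat:
  assumes p: "prime p" and k: "k \<ge> 1"
  shows "card {x::nat. x < p \<and> x ^ k mod p = 1} \<le> k"
proof -
  have "int ` {x::nat. x < p \<and> x ^ k mod p = 1} \<subseteq> {x::int. 0 \<le> x \<and> x < int p \<and> x ^ k mod int p = 1}"
  proof
    fix y assume "y \<in> int ` {x::nat. x < p \<and> x ^ k mod p = 1}"
    then obtain x where x: "x < p" "x ^ k mod p = 1" "y = int x" by auto
    have "int (x ^ k mod p) = int x ^ k mod int p" by (simp add: of_nat_mod)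
    then show "y \<in> {x::int. 0 \<le> x \<and> x < int p \<and> x ^ k mod int p = 1}" using x by auto
  qed
  then have "card (int ` {x::nat. x < p \<and> x ^ k mod p = 1}) \<le> k"
  proof -
    have fin: "finite {x::int. 0 \<le> x \<and> x < int p \<and> x ^ k mod int p = 1}"
      by (rule finite_subset[of _ "{0..<int p}"]) auto
    show ?thesis using card_mono[OF fin \<open>int ` _ \<subseteq> _\<close>] roots_unity_int[OF p k] by linarith
  qed
  then show ?thesis by (simp add: card_image)
qed

lemma fiber_bound:
  assumes p: "prime p" and k: "k \<ge> 1"
  shows "card {x \<in> U p. x ^ k mod p = h} \<le> k"
proof (cases "{x \<in> U p. x ^ k mod p = h} = {}")
  case True then show ?thesis by (metis card.empty zero_le)
next
  case False
  then obtain u where u: "u \<in> U p" "u ^ k mod p = h" by auto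
  then have "coprime u p" unfolding U_def by auto
  then obtain v where v: "[u * v = 1] (mod p)" using cong_solve_coprime_nat by auto
  have p0: "p > 1" using p prime_gt_1_nat by blast
  define f where "f = (\<lambda>x. (x * v) mod p)"
  have inj: "inj_on f {x \<in> U p. x ^ k mod p = h}"
  proof
    fix x y assume x: "x \<in> {x \<in> U p. x ^ k mod p = h}" and y: "y \<in> {x \<in> U p. x ^ k mod p = h}" and "f x = f y"
    then have "[x * v = y * v] (mod p)" unfolding f_def cong_def by simp
    then have "[x * v * u = y * v * u] (mod p)" by (rule cong_mult) simp
    then have "[x * (u * v) = y * (u * v)] (mod p)" by (simp add: mult_ac)
    moreover have "[x * (u * v) = x * 1] (mod p)" "[y * (u * v) = y * 1] (mod p)" by (rule cong_mult[OF cong_refl v])+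
    ultimately have "[x = y] (mod p)" by (metis cong_sym cong_trans mult_1_right)
    then show "x = y" using x y cong_less_modulus_unique_nat unfolding U_def by blast
  qed
  have sub: "f ` {x \<in> U p. x ^ k mod p = h} \<subseteq> {x::nat. x < p \<and> x ^ k mod p = 1}"
  proof
    fix y assume "y \<in> f ` {x \<in> U p. x ^ k mod p = h}"
    then obtain x where x: "x \<in> U p" "x ^ k mod p = h" and y: "y = f x" by auto
    have "[f x ^ k = (x * v) ^ k] (mod p)" unfolding f_def by (intro cong_pow) (simp add: cong_def)
    also have "(x * v) ^ k = x ^ k * v ^ k" by (simp add: power_mult_distrib)
    also have "[x ^ k * v ^ k = u ^ k * v ^ k] (mod p)" using x u by (intro cong_mult cong_refl) (simp add: cong_def)
    also have "u ^ k * v ^ k = (u * v) ^ k" by (simp add: power_mult_distrib)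
    also have "[(u * v) ^ k = 1 ^ k] (mod p)" using v by (intro cong_pow) simp
    finally have "[f x ^ k = 1] (mod p)" by simp
    then show "y \<in> {x::nat. x < p \<and> x ^ k mod p = 1}" unfolding y f_def cong_def using p0 by simp
  qed
  have "card {x \<in> U p. x ^ k mod p = h} = card (f ` {x \<in> U p. x ^ k mod p = h})"
    using card_image[OF inj] by simp
  also have "\<dots> \<le> card {x::nat. x < p \<and> x ^ k mod p = 1}"
    by (rule card_mono[OF _ sub]) simp
  also have "\<dots> \<le> k" by (rule roots_unity_nat[OF p k])
  finally show ?thesis .
qed




lemma U_prime: "prime p \<Longrightarrow> {..<p} = insert 0 (U p) \<and> 0 \<notin> U p"
proof -
  assume p: "prime p"
  have "x \<in> U p" if "0 < x" "x < p" for x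
    using that p unfolding U_def
    by (simp add: coprime_commute prime_imp_coprime_nat nat_dvd_not_less)
  moreover have "0 \<notin> U p" using p unfolding U_def by auto
  moreover have "p > 0" using p prime_gt_0_nat by blast
  ultimately show ?thesis unfolding U_def by auto
qed

lemma T_zero: "T k q 0 = of_nat (card (U q))"
  unfolding T_def by (simp add: e_def)

lemma parseval:
  assumes p: "prime p"
  shows "(\<Sum>b<p. (cmod (T k p b))^2) = real p * real (card {z \<in> U p \<times> U p. fst z ^ k mod p = snd z ^ k mod p})"
proof -
  have p0: "p > 0" using p prime_gt_0_nat by blast
  define D where "D = (\<lambda>z::nat\<times>nat. int (fst z ^ k) - int (snd z ^ k))"
  have 1: "complex_of_real ((cmod (T k p b))^2) = (\<Sum>z\<in>U p \<times> U p. e (real b * of_int (D z) / real p))" for b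
  proof -
    have "complex_of_real ((cmod (T k p b))^2) = T k p b * cnj (T k p b)" by (rule complex_norm_square)
    also have "\<dots> = (\<Sum>l\<in>U p. \<Sum>m\<in>U p. e (real (b * l ^ k) / real p) * e (- (real (b * m ^ k) / real p)))"
      unfolding T_def cnj_sum cnj_e sum_product ..
    also have "\<dots> = (\<Sum>z\<in>U p \<times> U p. e (real b * of_int (D z) / real p))"
      unfolding sum.cartesian_product
    proof (intro sum.cong refl, clarify)
      fix l m
      have "real (b * l ^ k) / real p + (- (real (b * m ^ k) / real p)) = real b * of_int (D (l, m)) / real p"
        unfolding D_def by (simp add: diff_divide_distrib right_diff_distrib)
      then show "e (real (b * l ^ k) / real p) * e (- (real (b * m ^ k) / real p)) = e (real b * of_int (D (l, m)) / real p)"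
        by (metis e_add)
    qed
    finally show ?thesis .
  qed
  have 2: "int p dvd D z \<longleftrightarrow> fst z ^ k mod p = snd z ^ k mod p" for z
    unfolding D_def cong_iff_dvd_diff[symmetric] by (metis cong_int_iff cong_def)
  have "complex_of_real (\<Sum>b<p. (cmod (T k p b))^2) = (\<Sum>b<p. \<Sum>z\<in>U p \<times> U p. e (real b * of_int (D z) / real p))"
    unfolding of_real_sum 1 ..
  also have "\<dots> = (\<Sum>z\<in>U p \<times> U p. \<Sum>b<p. e (real b * of_int (D z) / real p))"
    by (rule sum.swap)
  also have "\<dots> = (\<Sum>z\<in>U p \<times> U p. if int p dvd D z then of_nat p else 0)"
    using sum_e_lin[OF p0] by simp
  also have "\<dots> = of_nat p * of_nat (card {z \<in> U p \<times> U p. fst z ^ k mod p = snd z ^ k mod p})"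
    unfolding sum.If_cases[OF finite_cartesian_product[OF finite_U finite_U]] 2
    by (simp add: Int_def conj_commute)
  also have "\<dots> = complex_of_real (real p * real (card {z \<in> U p \<times> U p. fst z ^ k mod p = snd z ^ k mod p}))"
    by simp
  finally show ?thesis by (simp only: of_real_eq_iff)
qed

lemma T_prime_bound:
  assumes p: "prime p" and k: "k \<ge> 1" and b: "coprime p b"
  shows "(cmod (T k p b))^2 \<le> real k * (real p * real k - (real p - 1))"
proof -
  have p0: "p > 0" using p prime_gt_0_nat by blast
  define n where "n = card (U p)"
  have n: "n = p - 1" "n \<ge> 1" unfolding n_def using card_U[of p] p0 totient_prime[OF p] prime_gt_1_nat[OF p] by auto
  define Ns where "Ns = {z \<in> U p \<times> U p. fst z ^ k mod p = snd z ^ k mod p}"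
  define H where "H = (\<lambda>u. u ^ k mod p) ` U p"
  have finH: "finite H" unfolding H_def by simp
  have Ns_eq: "Ns = (SIGMA l:U p. {m \<in> U p. m ^ k mod p = l ^ k mod p})"
    unfolding Ns_def by auto
  have "card Ns = (\<Sum>l\<in>U p. card {m \<in> U p. m ^ k mod p = l ^ k mod p})"
    unfolding Ns_eq by (rule card_SigmaI) auto
  also have "\<dots> \<le> (\<Sum>l\<in>U p. k)" by (intro sum_mono fiber_bound[OF p k])
  finally have a: "card Ns \<le> k * n" unfolding n_def by (simp add: mult.commute)
  have "U p = (\<Union>h\<in>H. {x \<in> U p. x ^ k mod p = h})" unfolding H_def by auto
  then have "n \<le> (\<Sum>h\<in>H. card {x \<in> U p. x ^ k mod p = h})"
    unfolding n_def by (metis card_UN_le finH)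
  also have "\<dots> \<le> (\<Sum>h\<in>H. k)" by (intro sum_mono fiber_bound[OF p k])
  finally have bb: "n \<le> k * card H" by (simp add: mult.commute)
  have bU: "b mod p \<in> U p" using b p0 unfolding U_def by (simp add: coprime_commute)
  define B where "B = (\<lambda>h. (b * h) mod p) ` H"
  have injB: "inj_on (\<lambda>h. (b * h) mod p) H"
  proof
    fix x y assume x: "x \<in> H" and y: "y \<in> H" and "(b * x) mod p = (b * y) mod p"
    then have "[b * x = b * y] (mod p)" unfolding cong_def by simp
    then have "[x = y] (mod p)" using b cong_mult_lcancel_nat by (simp add: coprime_commute)
    moreover have "x < p" "y < p" using x y p0 unfolding H_def by auto
    ultimately show "x = y" using cong_less_modulus_unique_nat by blast
  qed
  have BU: "B \<subseteq> U p"
  proof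
    fix c assume "c \<in> B"
    then obtain u where u: "u \<in> U p" "c = (b * (u ^ k mod p)) mod p" unfolding B_def H_def by auto
    have "coprime (b * u ^ k) p" using u b unfolding U_def by (simp add: coprime_commute)
    then have "coprime c p" unfolding u(2) using p0
      by (metis coprime_mod_left_iff mod_mult_right_eq neq0_conv)
    then show "c \<in> U p" unfolding U_def using u p0 by simp
  qed
  have TB: "cmod (T k p c) = cmod (T k p b)" if cB: "c \<in> B" for c
  proof -
    obtain u where u: "u \<in> U p" "c = (b * (u ^ k mod p)) mod p" using cB unfolding B_def H_def by auto
    have "c = (b * u ^ k) mod p" unfolding u(2) by (simp add: mod_mult_right_eq)
    then have "T k p c = T k p (b * u ^ k)" using T_mod[OF p0, of k "b * u ^ k"] by simp
    also have "\<dots> = T k p b" using u p0 unfolding U_def by (intro T_unit) auto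
    finally show ?thesis by simp
  qed
  have "real (card H) * (cmod (T k p b))^2 = (\<Sum>c\<in>B. (cmod (T k p c))^2)"
    using TB card_image[OF injB] unfolding B_def by simp
  also have "\<dots> \<le> (\<Sum>c\<in>U p. (cmod (T k p c))^2)"
    by (rule sum_mono2[OF finite_U BU]) simp
  finally have c: "real (card H) * (cmod (T k p b))^2 \<le> (\<Sum>c\<in>U p. (cmod (T k p c))^2)" .
  have "(\<Sum>b<p. (cmod (T k p b))^2) = (cmod (T k p 0))^2 + (\<Sum>c\<in>U p. (cmod (T k p c))^2)"
    using U_prime[OF p] by simp
  then have d: "(\<Sum>c\<in>U p. (cmod (T k p c))^2) = real p * real (card Ns) - real n ^ 2"
    using parseval[OF p, of k] unfolding Ns_def n_def T_zero by simp
  define Y where "Y = (cmod (T k p b))^2"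
  have Y0: "Y \<ge> 0" unfolding Y_def by simp
  have hY: "real (card H) * Y \<le> real p * real k * real n - real n ^ 2"
  proof -
    have "real (card Ns) \<le> real k * real n" using a by (metis of_nat_le_iff of_nat_mult)
    then have "real p * real (card Ns) \<le> real p * (real k * real n)" by (intro mult_left_mono) auto
    then show ?thesis using c d unfolding Y_def by (simp add: mult_ac)
  qed
  have "real n * Y \<le> real k * real (card H) * Y"
    using bb Y0 by (intro mult_right_mono) (metis of_nat_le_iff of_nat_mult, simp)
  also have "\<dots> \<le> real k * (real p * real k * real n - real n ^ 2)"
    using hY by (simp add: mult.assoc mult_left_mono)
  also have "\<dots> = real n * (real k * (real p * real k - real n))" by (simp add: algebra_simps power2_eq_square)
  finally have "real n * Y \<le> real n * (real k * (real p * real k - real n))" .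
  then have "Y \<le> real k * (real p * real k - real n)" using n by (simp add: mult_le_cancel_left_pos)
  then show ?thesis unfolding Y_def using n p0 by (simp add: of_nat_diff)
qed




lemma mult_assembly:
  fixes k :: nat and th :: real and c :: "nat \<Rightarrow> real"
  assumes k: "k \<ge> 1" and c0: "\<And>p. c p \<ge> 0"
    and pp: "\<And>p t b. prime p \<Longrightarrow> t \<ge> 1 \<Longrightarrow> coprime p b \<Longrightarrow>
        cmod (T k (p^t) b) \<le> c p * real (p^t) powr (-th) * real (totient (p^t))"
  shows "q \<ge> 1 \<Longrightarrow> coprime q b \<Longrightarrow>
      cmod (T k q b) \<le> (\<Prod>p\<in>prime_factors q. c p) * real q powr (-th) * real (totient q)"
proof (induction q arbitrary: b rule: less_induct)
  case (less q)
  show ?case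
  proof (cases "q = 1")
    case True then show ?thesis using T_one[of k b] by simp
  next
    case False
    then obtain p where p: "prime p" "p dvd q" using prime_factor_nat by blast
    define t where "t = multiplicity p q"
    have q0: "q \<noteq> 0" using less.prems by simp
    have t1: "t \<ge> 1" unfolding t_def using p q0
      by (metis less_one not_le prime_elem_multiplicity_eq_zero_iff prime_imp_prime_elem)
    have nu: "\<not> is_unit p" using p by auto
    obtain m where qm: "q = p^t * m" and pm: "\<not> p dvd m"
      using multiplicity_decompose'[OF q0 nu] unfolding t_def by blast
    have m1: "m \<ge> 1" using qm q0 by (cases m) auto
    have "p \<le> p^t" using t1 p prime_gt_0_nat[OF p(1)] by (intro self_le_power) auto
    then have pt2: "p^t \<ge> 2" using prime_ge_2_nat[OF p(1)] by linarith
    have "1 * m < p^t * m" by (rule mult_strict_right_mono) (use pt2 m1 in auto)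
    then have mq: "m < q" unfolding qm by simp
    have cpm: "coprime p m" using p pm by (simp add: prime_imp_coprime)
    then have cptm: "coprime (p^t) m" by simp
    have cpb: "coprime p b" using less.prems p by (meson coprime_imp_coprime dvd_trans)
    have cmb: "coprime m b" using less.prems qm by (metis coprime_mult_left_iff)
    have c1: "coprime p (b * m^(k-1))" using cpb cpm by simp
    have c2: "coprime m (b * (p^t)^(k-1))" using cmb cpm by (simp add: coprime_commute)
    have T: "T k q b = T k (p^t) (b * m^(k-1)) * T k m (b * (p^t)^(k-1))"
      unfolding qm by (rule T_mult[OF cptm _ m1 k]) (use pt2 in simp)
    have b1: "cmod (T k (p^t) (b * m^(k-1))) \<le> c p * real (p^t) powr (-th) * real (totient (p^t))"
      by (rule pp[OF p(1) t1 c1])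
    have b2: "cmod (T k m (b * (p^t)^(k-1))) \<le> (\<Prod>p\<in>prime_factors m. c p) * real m powr (-th) * real (totient m)"
      by (rule less.IH[OF mq m1 c2])
    have pfq: "prime_factors q = insert p (prime_factors m)"
    proof -
      have "prime_factors (p^t) = {p}" using p t1 by (simp add: prime_factorization_prime_power)
      then show ?thesis unfolding qm using m1 p by (subst prime_factors_product) auto
    qed
    have pnm: "p \<notin> prime_factors m" using pm by auto
    have "cmod (T k q b) \<le> (c p * real (p^t) powr (-th) * real (totient (p^t))) *
        ((\<Prod>p\<in>prime_factors m. c p) * real m powr (-th) * real (totient m))"
      unfolding T norm_mult by (rule mult_mono[OF b1 b2]) (use c0 in \<open>auto intro!: mult_nonneg_nonneg prod_nonneg\<close>)
    also have "\<dots> = (\<Prod>p\<in>prime_factors q. c p) * real q powr (-th) * real (totient q)"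
      unfolding pfq prod.insert[OF finite_set_mset pnm]
      by (simp add: qm totient_mult_coprime[OF cptm] powr_mult)
    finally show ?thesis .
  qed
qed




lemma triv_bound:
  fixes th x M :: real
  assumes "th \<ge> 0" "1 \<le> x" "x \<le> M"
  shows "1 \<le> M powr th * x powr (-th)"
proof -
  have "x powr th \<le> M powr th" using assms by (intro powr_mono2) auto
  moreover have "x powr th > 0" using assms by simp
  ultimately show ?thesis unfolding powr_minus_divide by (simp add: field_simps)
qed

lemma powr_neg_sq: "(x::real) > 0 \<Longrightarrow> (x powr (-a))^2 = 1 / x powr (2*a)"
  by (simp add: power2_eq_square powr_add[symmetric] powr_minus_divide)

lemma pow5_le_pow6:
  fixes p :: real assumes "p \<ge> 5" shows "p^5 \<le> (p-1)^6"
proof -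
  define x where "x = p - 1"
  have x: "x \<ge> 4" "p = x + 1" using assms unfolding x_def by auto
  have "p^5 \<le> (5/4 * x)^5" using x by (intro power_mono) auto
  also have "\<dots> = (3125/1024) * x^5" by (simp add: power_mult_distrib power_divide)
  also have "\<dots> \<le> x * x^5" using x by (intro mult_right_mono) auto
  also have "x * x^5 = x^6" by (simp add: eval_nat_numeral)
  finally show ?thesis unfolding x_def .
qed

lemma cube_ineq:
  fixes p :: real assumes "p \<ge> 5" shows "p powr (2/3) * p \<le> (p-1)^2"
proof -
  define B where "B = p powr (2/3)"
  define w where "w = (p-1)^2 / p"
  have p0: "p > 0" using assms by simp
  have B3: "B ^ Suc 2 = p^2"
  proof -
    have "B ^ Suc 2 = p powr (real (Suc 2) * (2/3))" unfolding B_def using p0 by (simp add: powr_power)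
    also have "real (Suc 2) * (2/3) = (2::real)" by simp
    finally show ?thesis using p0 by simp
  qed
  have w3: "w ^ Suc 2 = (p-1)^6 / p^3" unfolding w_def by (simp add: power_divide flip: power_mult)
  have "p^2 * p^3 \<le> (p-1)^6" using pow5_le_pow6[OF assms] by (simp add: power_add[symmetric])
  then have "p^2 \<le> (p-1)^6 / p^3" using p0 by (simp add: field_simps)
  then have "B ^ Suc 2 \<le> w ^ Suc 2" unfolding B3 w3 .
  then have "B \<le> w" by (rule power_le_imp_le_base) (use p0 in \<open>simp add: w_def\<close>)
  then show ?thesis unfolding B_def w_def using p0 by (simp add: field_simps)
qed

lemma big_ineq:
  fixes p :: real and k :: nat
  assumes k: "k \<ge> 3" and p: "p > real k ^ 6"
  shows "p powr (2 / real k) * (real k * (p * real k - (p - 1))) \<le> (p - 1)^2"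
proof -
  have k1: "real k \<ge> 3" using k by simp
  have "real k ^ 6 \<ge> 3 ^ 6" using k1 by (intro power_mono) auto
  then have p1: "p \<ge> 2" using p by simp
  define A where "A = p powr (2 / real k)"
  have A1: "A \<ge> 1" unfolding A_def using p1 by (intro ge_one_powr_ge_zero) auto
  have A2: "A \<le> p powr (2/3)" unfolding A_def using p1 k1 by (intro powr_mono) (auto simp: field_simps)
  have k2: "real k ^ 2 \<le> p powr (1/3)"
  proof (rule power_le_imp_le_base[of _ 2])
    have "(p powr (1/3)) ^ Suc 2 = p powr (real (Suc 2) * (1/3))" using p1 by (simp add: powr_power)
    also have "\<dots> = p" using p1 by simp
    finally show "(real k ^ 2) ^ Suc 2 \<le> (p powr (1/3)) ^ Suc 2"
      using p by (simp flip: power_mult)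
  qed simp
  have "A * real k ^ 2 * p \<le> p powr (2/3) * p powr (1/3) * p"
    using A2 k2 A1 p1 by (intro mult_right_mono mult_mono) auto
  also have "p powr (2/3) * p powr (1/3) = p" using p1 by (simp add: powr_add[symmetric])
  finally have 1: "A * real k ^ 2 * p \<le> p * p" .
  have 2: "A * real k * (p - 1) \<ge> 1 * 3 * (p - 1)" using A1 k1 p1
    by (intro mult_mono mult_right_mono) auto
  have "A * (real k * (p * real k - (p - 1))) = A * real k ^ 2 * p - A * real k * (p - 1)"
    by (simp add: algebra_simps power2_eq_square)
  also have "\<dots> \<le> p * p - 3 * (p - 1)" using 1 2 by simp
  also have "\<dots> \<le> (p - 1)^2" using p1 by (simp add: power2_eq_square algebra_simps)
  finally show ?thesis unfolding A_def .
qed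

lemma sqb:
  fixes x a B C :: real
  assumes "x > 0" "(cmod z)^2 \<le> B" "x powr (2*a) * B \<le> C^2" "C \<ge> 0"
  shows "cmod z \<le> C * x powr (-a)"
proof (rule power2_le_imp_le)
  have xa: "x powr (2*a) > 0" using assms by simp
  have "B \<le> C^2 / x powr (2*a)" using assms xa by (simp add: field_simps)
  also have "\<dots> = (C * x powr (-a))^2" using assms powr_neg_sq[of x a] by (simp add: power_mult_distrib)
  finally show "(cmod z)^2 \<le> (C * x powr (-a))^2" using assms by linarith
qed (use assms in simp)




lemma kk_powr: "real k \<ge> 1 \<Longrightarrow> (real k ^ k) powr (1 / real k) = real k"
proof -
  assume k: "real k \<ge> 1"
  then have "(real k ^ k) = real k powr real k" by (simp add: powr_realpow)
  then have "(real k ^ k) powr (1 / real k) = real k powr (real k * (1 / real k))" by (simp add: powr_powr)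
  also have "\<dots> = real k" using k by simp
  finally show ?thesis .
qed

lemma not_prime_4: "\<not> prime (4::nat)"
proof
  assume "prime (4::nat)"
  moreover have "(2::nat) dvd 4" by simp
  ultimately have "(2::nat) = 1 \<or> (2::nat) = 4" unfolding prime_nat_iff by blast
  then show False by simp
qed

lemma triv_case:
  fixes z :: complex and x M th c :: real and n :: nat
  assumes "cmod z \<le> real n" "th \<ge> 0" "1 \<le> x" "x \<le> M" "M powr th \<le> c"
  shows "cmod z \<le> c * x powr (-th) * real n"
proof -
  have "1 \<le> M powr th * x powr (-th)" by (rule triv_bound) (use assms in auto)
  also have "\<dots> \<le> c * x powr (-th)" using assms by (intro mult_right_mono) auto
  finally have "1 * real n \<le> c * x powr (-th) * real n" by (intro mult_right_mono) auto
  then show ?thesis using assms(1) by linarith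
qed

lemma pp_k:
  assumes k: "k \<ge> 3" and p: "prime p" and t: "t \<ge> 1" and b: "coprime p b"
  shows "cmod (T k (p^t) b) \<le> (if p \<le> k^6 then real k else 1) * real (p^t) powr (-(1/real k)) * real (totient (p^t))"
    (is "_ \<le> ?c * _ * _")
proof -
  define v where "v = multiplicity p k"
  have p0: "p > 0" and p2: "p \<ge> 2" using p prime_gt_0_nat prime_ge_2_nat by auto
  have c0: "?c \<ge> 0" by simp
  have kr: "real k \<ge> 1" using k by simp
  have th0: "1 / real k \<ge> 0" by simp
  have kkc: "(real k ^ k) powr (1 / real k) \<le> real k" using kk_powr[OF kr] by simp
  have nT: "cmod (T k (p^t) b) \<le> real (totient (p^t))" using norm_T_le[of "p^t" k b] p0 by simp
  show ?thesis
  proof (cases "t \<ge> 2 * v + 2")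
    case True
    then have "T k (p^t) b = 0" using T_vanish[OF p _ b] k unfolding v_def by simp
    then show ?thesis by simp
  next
    case tv: False
    show ?thesis
    proof (cases "t \<ge> 2")
      case True
      then have v1: "v \<ge> 1" using tv by simp
      have pvk: "p^v dvd k" unfolding v_def by (rule multiplicity_dvd)
      then have pvk': "p^v \<le> k" using k by (intro dvd_imp_le) auto
      have "p \<le> p^v" using v1 p0 by (intro self_le_power) auto
      then have "p \<le> k" using pvk' by simp
      moreover have "k \<le> k^6" using k by (simp add: self_le_power)
      ultimately have c: "?c = real k" by simp
      have "p^t \<le> p ^ (2 * v + 1)" using tv p0 by (intro power_increasing) auto
      also have "\<dots> = p * (p^v)^2" by (simp add: power_mult[symmetric] mult.commute)
      also have "\<dots> \<le> k * k^2" using \<open>p \<le> k\<close> pvk' by (intro mult_mono power_mono) auto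
      also have "\<dots> = k^3" by (simp add: power2_eq_square power3_eq_cube)
      also have "\<dots> \<le> k^k" using k by (intro power_increasing) auto
      finally have "real (p^t) \<le> real k ^ k" by (metis of_nat_le_iff of_nat_power)
      then show ?thesis unfolding c
        by (intro triv_case[OF nT th0 _ _ kkc]) (use p0 in auto)
    next
      case False
      then have t1: "t = 1" using t by simp
      have tot: "totient p = p - 1" using p by (simp add: totient_prime)
      have Y: "(cmod (T k p b))^2 \<le> real k * (real p * real k - (real p - 1))"
        using T_prime_bound[OF p _ b] k by simp
      show ?thesis
      proof (cases "p \<le> k^6")
        case small: True
        show ?thesis
        proof (cases "p \<le> 3")
          case True
          have "k \<le> k^k" using k by (intro self_le_power) auto
          then have "p \<le> k^k" using True k by linarith
          then have "real (p^t) \<le> real k ^ k" using t1 by (metis of_nat_le_iff of_nat_power power_one_right)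
          moreover have c: "?c = real k" using small by simp
          ultimately show ?thesis unfolding c
            by (intro triv_case[OF nT th0 _ _ kkc] ) (use p0 in auto)
        next
          case False
          have "p \<noteq> 4" using p not_prime_4 by auto
          then have p5: "p \<ge> 5" using False by linarith
          have "cmod (T k p b) \<le> (real k * (real p - 1)) * real p powr (-(1 / real k))"
          proof (rule sqb[OF _ Y])
            show "real p > 0" using p0 by simp
            show "real k * (real p - 1) \<ge> 0" using p0 by simp
            have A2: "real p powr (2 * (1 / real k)) \<le> real p powr (2/3)" using p2 k
              by (intro powr_mono) (auto simp: field_simps)
            have cube: "real p powr (2/3) * real p \<le> (real p - 1)^2" using cube_ineq[of "real p"] p5 by simp
            have "real p powr (2 * (1 / real k)) * (real k * (real p * real k - (real p - 1)))
                \<le> real p powr (2 * (1 / real k)) * (real k * (real p * real k))"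
              using p2 by (intro mult_left_mono) auto
            also have "\<dots> = real k ^ 2 * (real p powr (2 * (1 / real k)) * real p)" by (simp add: power2_eq_square mult_ac)
            also have "\<dots> \<le> real k ^ 2 * (real p - 1)^2"
            proof (intro mult_left_mono)
              have "real p powr (2 * (1 / real k)) * real p \<le> real p powr (2/3) * real p"
                using A2 p2 by (intro mult_right_mono) auto
              then show "real p powr (2 * (1 / real k)) * real p \<le> (real p - 1)^2" using cube by linarith
            qed simp
            also have "\<dots> = (real k * (real p - 1))^2" by (simp add: power_mult_distrib)
            finally show "real p powr (2 * (1 / real k)) * (real k * (real p * real k - (real p - 1))) \<le> (real k * (real p - 1))^2" .
          qed
          then show ?thesis using small t1 tot p0 by (simp add: of_nat_diff mult_ac)
        qed
      next
        case large: False
        have "cmod (T k p b) \<le> (real p - 1) * real p powr (-(1 / real k))"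
        proof (rule sqb[OF _ Y])
          show "real p > 0" using p0 by simp
          show "real p - 1 \<ge> 0" using p0 by simp
          have "real p > real k ^ 6" using large by (metis not_le of_nat_less_iff of_nat_power)
          then show "real p powr (2 * (1 / real k)) * (real k * (real p * real k - (real p - 1))) \<le> (real p - 1)^2"
            using big_ineq[OF k] by simp
        qed
        then show ?thesis using large t1 tot p0 by (simp add: of_nat_diff mult_ac)
      qed
    qed
  qed
qed




lemma prod_bound:
  fixes c :: "nat \<Rightarrow> real"
  assumes A: "finite A" and S: "finite S" and out: "\<And>p. p \<in> A - S \<Longrightarrow> c p = 1"
    and ge: "\<And>p. p \<in> S \<Longrightarrow> c p \<ge> 1"
  shows "(\<Prod>p\<in>A. c p) \<le> (\<Prod>p\<in>S. c p)"
proof -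
  have "(\<Prod>p\<in>A. c p) = (\<Prod>p\<in>A \<inter> S. c p) * (\<Prod>p\<in>A - S. c p)" by (rule prod.Int_Diff[OF A])
  also have "(\<Prod>p\<in>A - S. c p) = 1" using out by simp
  also have "(\<Prod>p\<in>S. c p) = (\<Prod>p\<in>S - A \<inter> S. c p) * (\<Prod>p\<in>A \<inter> S. c p)"
    by (rule prod.subset_diff) (use S in auto)
  moreover have "(\<Prod>p\<in>S - A \<inter> S. c p) \<ge> 1" using ge by (intro prod_ge_1) auto
  moreover have "(\<Prod>p\<in>A \<inter> S. c p) \<ge> 0" using ge by (intro prod_nonneg) (auto intro: order.trans[OF zero_le_one])
  ultimately show ?thesis by (simp add: mult_le_cancel_right1 order_trans)
qed

lemma not_primes_small: "\<not> prime (4::nat)" "\<not> prime (6::nat)" "\<not> prime (8::nat)" "\<not> prime (9::nat)" "\<not> prime (10::nat)"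
  using prime_product[of "2::nat" 2] prime_product[of "2::nat" 3] prime_product[of "2::nat" 4]
    prime_product[of "3::nat" 3] prime_product[of "2::nat" 5] by auto

lemma poly11:
  fixes p :: real assumes "p \<ge> 11"
  shows "p * (2 * (p + 1))^2 \<le> ((p - 1)^2)^2"
proof -
  define m where "m = p - 11"
  have m: "m \<ge> 0" using assms unfolding m_def by simp
  have "((p - 1)^2)^2 - p * (2 * (p + 1))^2 = m^4 + 36*m^3 + 460*m^2 + 2368*m + 3664"
    unfolding m_def by (simp add: power2_eq_square power3_eq_cube power4_eq_xxxx algebra_simps)
  moreover have "m^4 + 36*m^3 + 460*m^2 + 2368*m + 3664 \<ge> 0" using m by simp
  ultimately show ?thesis by linarith
qed

definition c2 :: "nat \<Rightarrow> real" where
  "c2 p = (if p = 2 then 8 powr (1/4) else if p = 3 \<or> p = 5 \<or> p = 7 then real p powr (1/4) else 1)"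

lemma pp_2:
  assumes p: "prime p" and t: "t \<ge> 1" and b: "coprime p b"
  shows "cmod (T 2 (p^t) b) \<le> c2 p * real (p^t) powr (-(1/4)) * real (totient (p^t))"
proof -
  define v where "v = multiplicity p (2::nat)"
  have p0: "p > 0" and p2: "p \<ge> 2" using p prime_gt_0_nat prime_ge_2_nat by auto
  have th0: "(1/4::real) \<ge> 0" by simp
  have nT: "cmod (T 2 (p^t) b) \<le> real (totient (p^t))" using norm_T_le[of "p^t" 2 b] p0 by simp
  show ?thesis
  proof (cases "t \<ge> 2 * v + 2")
    case True
    then have "T 2 (p^t) b = 0" using T_vanish[OF p _ b] unfolding v_def by simp
    then show ?thesis by (simp add: c2_def)
  next
    case tv: False
    show ?thesis
    proof (cases "p = 2")
      case True
      have "v = 1" unfolding v_def True using multiplicity_prime_power[of "2::nat" 1] by simp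
      then have "t \<le> 3" using tv by simp
      then have "p^t \<le> 2^3" unfolding True by (intro power_increasing) auto
      then have "p^t \<le> 8" by simp
      then have "real (p^t) \<le> 8" by (metis of_nat_le_iff of_nat_numeral)
      then show ?thesis using True
        by (intro triv_case[OF nT th0]) (use p0 in \<open>auto simp: c2_def\<close>)
    next
      case p2': False
      have "\<not> p dvd 2" using p p2' by (metis dvd_refl primes_dvd_imp_eq two_is_prime_nat)
      then have "v = 0" unfolding v_def using prime_elem_multiplicity_eq_zero_iff[of p "2::nat"] p by simp
      then have t1: "t = 1" using tv t by simp
      have tot: "totient p = p - 1" using p by (simp add: totient_prime)
      show ?thesis
      proof (cases "p = 3 \<or> p = 5 \<or> p = 7")
        case True
        then have c: "c2 p = real p powr (1/4)" unfolding c2_def by auto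
        show ?thesis unfolding c t1 using p0
          by (intro triv_case[OF _ th0]) (use nT t1 in auto)
      next
        case False
        then have c: "c2 p = 1" using p2' unfolding c2_def by auto
        have "p \<noteq> 4" "p \<noteq> 6" "p \<noteq> 8" "p \<noteq> 9" "p \<noteq> 10" using p not_primes_small by auto
        then have p11: "p \<ge> 11" using False p2' p2 by linarith
        have Y: "(cmod (T 2 p b))^2 \<le> 2 * (real p + 1)"
          using T_prime_bound[OF p _ b, of 2] by simp
        have "cmod (T 2 p b) \<le> (real p - 1) * real p powr (-(1/4))"
        proof (rule sqb[OF _ Y])
          show "real p > 0" using p0 by simp
          show "real p - 1 \<ge> 0" using p0 by simp
          have sq: "real p powr (2 * (1/4)) = sqrt (real p)" by (simp add: powr_half_sqrt)
          have "sqrt (real p) * (2 * (real p + 1)) \<le> (real p - 1)^2"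
          proof (rule power2_le_imp_le)
            have "(sqrt (real p) * (2 * (real p + 1)))^2 = real p * (2 * (real p + 1))^2"
              by (simp add: power_mult_distrib)
            also have "\<dots> \<le> ((real p - 1)^2)^2" using poly11[of "real p"] p11 by simp
            finally show "(sqrt (real p) * (2 * (real p + 1)))^2 \<le> ((real p - 1)^2)^2" .
          qed simp
          then show "real p powr (2 * (1/4)) * (2 * (real p + 1)) \<le> (real p - 1)^2" unfolding sq .
        qed
        then show ?thesis using t1 tot p0 c by (simp add: of_nat_diff mult_ac)
      qed
    qed
  qed
qed

lemma c2_prod: "(\<Prod>p\<in>prime_factors q. c2 p) \<le> 8"
proof -
  have "(\<Prod>p\<in>prime_factors q. c2 p) \<le> (\<Prod>p\<in>{2,3,5,7}. c2 p)"
  proof (rule prod_bound)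
    show "c2 p = 1" if "p \<in> prime_factors q - {2,3,5,7}" for p using that by (auto simp: c2_def)
    show "c2 p \<ge> 1" if "p \<in> {2,3,5,7}" for p
      using that by (auto simp: c2_def intro!: ge_one_powr_ge_zero)
  qed auto
  also have "(\<Prod>p\<in>{2,3,5,7}. c2 p) = 8 powr (1/4) * (3 powr (1/4) * (5 powr (1/4) * 7 powr (1/4)))"
    by (simp add: c2_def)
  also have "\<dots> = 840 powr (1/4)" by (simp add: powr_mult[symmetric])
  also have "\<dots> \<le> 4096 powr (1/4)" by (intro powr_mono2) auto
  also have "(4096::real) = 8 powr 4" by simp
  also have "(8 powr 4) powr (1/4) = (8::real)" by (simp add: powr_powr)
  finally show ?thesis .
qed

lemma ck_prod:
  assumes k: "k \<ge> 3"
  shows "(\<Prod>p\<in>prime_factors q. (if p \<le> k^6 then real k else 1)) \<le> C_const k"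
proof -
  have fin: "finite {p. prime p \<and> p \<le> k ^ 6}" by (rule finite_subset[of _ "{..k^6}"]) auto
  have "(\<Prod>p\<in>prime_factors q. (if p \<le> k^6 then real k else 1)) \<le> (\<Prod>p\<in>{p. prime p \<and> p \<le> k ^ 6}. (if p \<le> k^6 then real k else 1))"
  proof (rule prod_bound[OF _ fin])
    show "(if p \<le> k^6 then real k else 1) = 1" if "p \<in> prime_factors q - {p. prime p \<and> p \<le> k ^ 6}" for p
      using that by auto
    show "(if p \<le> k^6 then real k else 1) \<ge> 1" if "p \<in> {p. prime p \<and> p \<le> k ^ 6}" for p
      using that k by auto
  qed auto
  also have "\<dots> = C_const k" unfolding C_const_def by (intro prod.cong refl) auto
  finally show ?thesis .
qed

theorem proposition8p3:
  fixes q a :: nat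
  assumes "q \<ge> 1" and "coprime q a"
  shows "cmod (S_star 2 q a) \<le> 8 * real q powr (-1/4) * real (totient q) \<and>
         (\<forall>k::nat. k > 2 \<longrightarrow>
           cmod (S_star k q a) \<le> C_const k * real q powr (-1 / real k) * real (totient q))"
proof
  have X0: "real q powr th * real (totient q) \<ge> 0" for th by simp
  have "cmod (T 2 q a) \<le> (\<Prod>p\<in>prime_factors q. c2 p) * real q powr (-(1/4)) * real (totient q)"
    by (rule mult_assembly[OF _ _ pp_2 assms]) (auto simp: c2_def)
  also have "\<dots> \<le> 8 * real q powr (-(1/4)) * real (totient q)"
    using c2_prod[of q] X0[of "-(1/4)"] by (simp add: mult.assoc mult_right_mono)
  finally show "cmod (S_star 2 q a) \<le> 8 * real q powr (-1/4) * real (totient q)"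
    using S_eq_T[OF assms(1)] by simp
next
  show "\<forall>k::nat. k > 2 \<longrightarrow> cmod (S_star k q a) \<le> C_const k * real q powr (-1 / real k) * real (totient q)"
  proof (intro allI impI)
    fix k :: nat assume "k > 2"
    then have k: "k \<ge> 3" by simp
    have X0: "real q powr th * real (totient q) \<ge> 0" for th by simp
    have "cmod (T k q a) \<le> (\<Prod>p\<in>prime_factors q. (if p \<le> k^6 then real k else 1)) * real q powr (-(1/real k)) * real (totient q)"
      by (rule mult_assembly[OF _ _ pp_k[OF k] assms]) (use k in auto)
    also have "\<dots> \<le> C_const k * real q powr (-(1/real k)) * real (totient q)"
      using ck_prod[OF k, of q] X0[of "-(1/real k)"] by (simp add: mult.assoc mult_right_mono)
    finally show "cmod (S_star k q a) \<le> C_const k * real q powr (-1 / real k) * real (totient q)"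
      using S_eq_T[OF assms(1)] by simp
  qed
qed


end
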